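(* Under the hypotheses of the preceding setting ($\mathfrak g$ finite-dimensional over $\mathbb F$, $R$ an endomorphism of $\mathfrak g$, $c\in\mathbb F$, $\mathcal R(x,y)=(R(x-y)+cy,R(x-y)+cx)$ an $R$-matrix of $\mathfrak g\times\mathfrak g$), let $H$ be an $\mathrm{Ad}^*$-invariant function on $\mathfrak g^*$, $\lambda\in\mathbb F$, and $\psi_\lambda(\xi,\eta)=\lambda\xi-\eta$. Then for every function $K$ on $\mathfrak g^*\times\mathfrak g^*$ and every $(\xi,\eta)$, writing $u=d_{\lambda\xi-\eta}H\in\mathfrak g$, $$\{K,H\circ\psi_\lambda\}_{\mathcal R}(\xi,\eta)=\frac{1-\lambda}{2}\Big\langle(\xi,\eta),\big[\big((R-cI)u,(R+cI)u\big),\,d_{(\xi,\eta)}K\big]\Big\rangle .$$ In particular, if $\mathfrak g=\mathfrak g_+\oplus\mathfrak g_-$ is a direct sum of two Lie subalgebras and $R=P_+-P_-$ (difference of the corresponding projections; then $c=1$), one has $\{K,H\circ\psi_\lambda\}_{\mathcal R}(\xi,\eta)=(1-\lambda)\big\langle(\xi,\eta),[(-u_-,u_+),d_{(\xi,\eta)}K]\big\rangle$ where $u_\pm=P_\pm u$.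
   Context: $\mathfrak g\times\mathfrak g$ carries the componentwise bracket. $\mathfrak g^*\times\mathfrak g^*$ is identified with $(\mathfrak g\times\mathfrak g)^*$ via $\langle(\xi,\eta),(x,y)\rangle=\langle\xi,x\rangle-\langle\eta,y\rangle$; differentials of functions on $\mathfrak g^*\times\mathfrak g^*$ are elements of $\mathfrak g\times\mathfrak g$ via this pairing, and $d_\xi H\in\mathfrak g$ for $H$ on $\mathfrak g^*$. The Poisson $\mathcal R$-bracket is $\{F,H\}_{\mathcal R}(\xi,\eta)=\tfrac12\langle(\xi,\eta),[\mathcal R\,dF,dH]+[dF,\mathcal R\,dH]\rangle$ (differentials at $(\xi,\eta)$). The left-hand side $\{K,H\circ\psi_\lambda\}_{\mathcal R}$ is the derivative of $K$ along the Hamiltonian vector field of $H\circ\psi_\lambda$. *)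

theory Defs
  imports "HOL-Analysis.Analysis"
begin

text \<open>The Lie algebra g is modelled as 'f^'n (finite-dimensional over the field 'f,
a real normed field such as real or complex, so that differentials make sense);
its dual g* is identified with 'f^'n via the canonical pairing below.\<close>

definition dpair :: "'f::real_normed_field ^ 'n \<Rightarrow> 'f ^ 'n \<Rightarrow> 'f" where
  "dpair \<xi> x = (\<Sum>i\<in>UNIV. \<xi> $ i * x $ i)"

definition pair2 :: "('f::real_normed_field ^ 'n) \<times> ('f ^ 'n) \<Rightarrow> ('f ^ 'n) \<times> ('f ^ 'n) \<Rightarrow> 'f" where
  "pair2 p q = dpair (fst p) (fst q) - dpair (snd p) (snd q)"

definition has_dgrad :: "('f::real_normed_field ^ 'n \<Rightarrow> 'f) \<Rightarrow> 'f ^ 'n \<Rightarrow> 'f ^ 'n \<Rightarrow> bool" where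
  "has_dgrad H u \<xi> \<longleftrightarrow> (H has_derivative (\<lambda>\<alpha>. dpair \<alpha> u)) (at \<xi>)"

definition dgrad :: "('f::real_normed_field ^ 'n \<Rightarrow> 'f) \<Rightarrow> 'f ^ 'n \<Rightarrow> 'f ^ 'n" where
  "dgrad H \<xi> = (THE u. has_dgrad H u \<xi>)"

definition has_dgrad2 :: "(('f::real_normed_field ^ 'n) \<times> ('f ^ 'n) \<Rightarrow> 'f)
    \<Rightarrow> ('f ^ 'n) \<times> ('f ^ 'n) \<Rightarrow> ('f ^ 'n) \<times> ('f ^ 'n) \<Rightarrow> bool" where
  "has_dgrad2 K w p \<longleftrightarrow> (K has_derivative (\<lambda>q. pair2 q w)) (at p)"

definition dgrad2 :: "(('f::real_normed_field ^ 'n) \<times> ('f ^ 'n) \<Rightarrow> 'f)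
    \<Rightarrow> ('f ^ 'n) \<times> ('f ^ 'n) \<Rightarrow> ('f ^ 'n) \<times> ('f ^ 'n)" where
  "dgrad2 K p = (THE w. has_dgrad2 K w p)"

definition pscale :: "'f::real_normed_field \<Rightarrow> ('f ^ 'n) \<times> ('f ^ 'n) \<Rightarrow> ('f ^ 'n) \<times> ('f ^ 'n)" where
  "pscale a p = (a *s fst p, a *s snd p)"

definition f_linear :: "('f \<Rightarrow> 'v \<Rightarrow> 'v) \<Rightarrow> ('v::plus \<Rightarrow> 'v) \<Rightarrow> bool" where
  "f_linear sc f \<longleftrightarrow> (\<forall>x y. f (x + y) = f x + f y) \<and> (\<forall>a x. f (sc a x) = sc a (f x))"

definition lie_algebra :: "('f \<Rightarrow> 'v \<Rightarrow> 'v) \<Rightarrow> ('v::ab_group_add \<Rightarrow> 'v \<Rightarrow> 'v) \<Rightarrow> bool" where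
  "lie_algebra sc br \<longleftrightarrow>
     (\<forall>z. f_linear sc (\<lambda>x. br x z)) \<and> (\<forall>x. f_linear sc (\<lambda>z. br x z)) \<and>
     (\<forall>x. br x x = 0) \<and>
     (\<forall>x y z. br x (br y z) + br y (br z x) + br z (br x y) = 0)"

definition prod_br :: "('g \<Rightarrow> 'g \<Rightarrow> 'g) \<Rightarrow> 'g \<times> 'g \<Rightarrow> 'g \<times> 'g \<Rightarrow> 'g \<times> 'g" where
  "prod_br br p q = (br (fst p) (fst q), br (snd p) (snd q))"

definition is_R_matrix :: "('f::field \<Rightarrow> 'v \<Rightarrow> 'v) \<Rightarrow> ('v::ab_group_add \<Rightarrow> 'v \<Rightarrow> 'v) \<Rightarrow> ('v \<Rightarrow> 'v) \<Rightarrow> bool" where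
  "is_R_matrix sc br Rm \<longleftrightarrow> f_linear sc Rm \<and>
     lie_algebra sc (\<lambda>X Y. sc (1/2) (br (Rm X) Y + br X (Rm Y)))"

definition calR :: "('f::real_normed_field ^ 'n \<Rightarrow> 'f ^ 'n) \<Rightarrow> 'f \<Rightarrow> ('f ^ 'n) \<times> ('f ^ 'n) \<Rightarrow> ('f ^ 'n) \<times> ('f ^ 'n)" where
  "calR R c p = (R (fst p - snd p) + c *s snd p, R (fst p - snd p) + c *s fst p)"

definition poissonR :: "('f::real_normed_field ^ 'n \<Rightarrow> 'f ^ 'n \<Rightarrow> 'f ^ 'n)
    \<Rightarrow> (('f ^ 'n) \<times> ('f ^ 'n) \<Rightarrow> ('f ^ 'n) \<times> ('f ^ 'n))
    \<Rightarrow> (('f ^ 'n) \<times> ('f ^ 'n) \<Rightarrow> 'f) \<Rightarrow> (('f ^ 'n) \<times> ('f ^ 'n) \<Rightarrow> 'f)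
    \<Rightarrow> ('f ^ 'n) \<times> ('f ^ 'n) \<Rightarrow> 'f" where
  "poissonR br Rm F G p = (1/2) * pair2 p
      (prod_br br (Rm (dgrad2 F p)) (dgrad2 G p) + prod_br br (dgrad2 F p) (Rm (dgrad2 G p)))"

text \<open>Ad*-invariance (infinitesimal form): H is differentiable and
  dH vanishes in every coadjoint direction ad*_x xi, i.e. <xi,[x, d_xi H]> = 0.\<close>
definition ad_star_invariant :: "('f::real_normed_field ^ 'n \<Rightarrow> 'f ^ 'n \<Rightarrow> 'f ^ 'n)
    \<Rightarrow> ('f ^ 'n \<Rightarrow> 'f) \<Rightarrow> bool" where
  "ad_star_invariant br H \<longleftrightarrow> (\<forall>\<xi>. \<exists>u. has_dgrad H u \<xi>) \<and>
     (\<forall>\<xi> x. dpair \<xi> (br x (dgrad H \<xi>)) = 0)"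

end

theory Submission imports Defs begin

lemma norm_smult_vec: "norm (lam *s (x::'f::real_normed_field^'n)) = norm lam * norm x"
  unfolding norm_vec_def by (simp add: norm_mult L2_set_right_distrib)

lemma bl_smult: "bounded_linear (\<lambda>x::'f::real_normed_field^'n. lam *s x)"
  apply (rule bounded_linear_intro[where K="norm lam"])
  by (auto simp: vector_add_ldistrib norm_smult_vec scalar_mult_eq_scaleR vec_eq_iff)

lemma dpair_add_r: "dpair a (x + y) = dpair a x + dpair a y"
  by (simp add: dpair_def distrib_left sum.distrib)
lemma dpair_add_l: "dpair (a + b) x = dpair a x + dpair b x"
  by (simp add: dpair_def distrib_right sum.distrib)
lemma dpair_diff_r: "dpair a (x - y) = dpair a x - dpair a y"
  by (simp add: dpair_def right_diff_distrib sum_subtractf)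
lemma dpair_diff_l: "dpair (a - b) x = dpair a x - dpair b x"
  by (simp add: dpair_def left_diff_distrib sum_subtractf)
lemma dpair_neg_r: "dpair a (- x) = - dpair a x"
  by (simp add: dpair_def sum_negf)
lemma dpair_scale_r: "dpair a (c *s x) = c * dpair a x"
  by (simp add: dpair_def sum_distrib_left mult_ac)
lemma dpair_scale_l: "dpair (c *s a) x = c * dpair a x"
  by (simp add: dpair_def sum_distrib_left mult_ac)

lemma dpair_axis: "dpair (axis i 1) x = x $ i"
  by (simp add: dpair_def axis_def if_distrib[of "\<lambda>t. t * _"] sum.delta cong: if_cong)

lemma has_dgrad_unique: "has_dgrad H u x \<Longrightarrow> has_dgrad H v x \<Longrightarrow> u = v"
  unfolding has_dgrad_def
  by (drule (1) has_derivative_unique) (metis vec_eq_iff dpair_axis)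

lemma has_dgrad2_unique: "has_dgrad2 K u x \<Longrightarrow> has_dgrad2 K v x \<Longrightarrow> u = v"
  unfolding has_dgrad2_def
proof -
  assume a: "(K has_derivative (\<lambda>q. pair2 q u)) (at x)" "(K has_derivative (\<lambda>q. pair2 q v)) (at x)"
  have e: "\<And>q. pair2 q u = pair2 q v" using has_derivative_unique[OF a] by meson
  have "fst u $ i = fst v $ i" for i using e[of "(axis i 1, 0)"] by (simp add: pair2_def dpair_axis, simp add: dpair_def)
  moreover have "snd u $ i = snd v $ i" for i using e[of "(0, axis i 1)"] by (simp add: pair2_def dpair_axis, simp add: dpair_def)
  ultimately show ?thesis by (simp add: prod_eq_iff vec_eq_iff)
qed

lemma lie_facts:
  assumes lie: "lie_algebra (*s) br"
  shows "br (x + y) z = br x z + br y z" "br x (y + z) = br x y + br x z"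
    "br (a *s x) z = a *s br x z" "br x (a *s z) = a *s br x z"
    "br (x - y) z = br x z - br y z" "br x (y - z) = br x y - br x z"
    "br (- x) z = - br x z" "br x (- z) = - br x z"
    "br y x = - br x y"
proof -
  have L: "f_linear (*s) (\<lambda>x. br x z)" for z using lie unfolding lie_algebra_def by blast
  have Rr: "f_linear (*s) (\<lambda>z. br x z)" for x using lie unfolding lie_algebra_def by blast
  have al: "br x x = 0" for x using lie unfolding lie_algebra_def by blast
  show a1: "br (x + y) z = br x z + br y z" for x y z using L unfolding f_linear_def by blast
  show a2: "br x (y + z) = br x y + br x z" for x y z using Rr unfolding f_linear_def by blast
  show "br (a *s x) z = a *s br x z" using L unfolding f_linear_def by blast
  show "br x (a *s z) = a *s br x z" using Rr unfolding f_linear_def by blast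
  have n1: "br (- x) z = - br x z" for x z
  proof -
    have "br (x + - x) z = br x z + br (-x) z" by (rule a1)
    moreover have "br 0 z = 0" using a1[of 0 0 z] by simp
    ultimately show ?thesis by (simp add: eq_neg_iff_add_eq_0 add.commute)
  qed
  have n2: "br x (- z) = - br x z" for x z
  proof -
    have "br x (z + - z) = br x z + br x (- z)" by (rule a2)
    moreover have "br x 0 = 0" using a2[of x 0 0] by simp
    ultimately show ?thesis by (simp add: eq_neg_iff_add_eq_0 add.commute)
  qed
  show "br (- x) z = - br x z" by (rule n1)
  show "br x (- z) = - br x z" by (rule n2)
  show "br (x - y) z = br x z - br y z" using a1[of x "-y" z] n1 by simp
  show "br x (y - z) = br x y - br x z" using a2[of x y "-z"] n2 by simp
  have "br (x + y) (x + y) = 0" by (rule al)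
  hence "br x x + br y x + (br x y + br y y) = 0" by (simp add: a1 a2)
  hence "br x y + br y x = 0" by (simp add: al add.commute)
  thus "br y x = - br x y" by (simp add: eq_neg_iff_add_eq_0 add.commute)
qed

lemma lin_facts:
  assumes "f_linear (*s) (R :: 'f::real_normed_field^'n \<Rightarrow> _)"
  shows "R (x + y) = R x + R y" "R (a *s x) = a *s R x" "R (x - y) = R x - R y"
proof -
  show a: "R (x + y) = R x + R y" for x y using assms unfolding f_linear_def by blast
  show s: "R (a *s x) = a *s R x" for a x using assms unfolding f_linear_def by blast
  have "R (- y) = - R y" using s[of "-1" y] by (simp add: vector_sneg_minus1[symmetric])
  thus "R (x - y) = R x - R y" using a[of x "-y"] by simp
qed


lemma alg:
  fixes br :: "'f::real_normed_field ^ 'n \<Rightarrow> 'f ^ 'n \<Rightarrow> 'f ^ 'n"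
  assumes lie: "lie_algebra (*s) br" and Rlin: "f_linear (*s) R"
    and inv: "\<And>x. dpair (lam *s \<xi> - \<eta>) (br x u) = 0"
  shows "(1/2) * pair2 (\<xi>,\<eta>) (prod_br br (calR R c (a,b)) (lam *s u, u)
            + prod_br br (a,b) (calR R c (lam *s u, u)))
       = ((1-lam)/2) * pair2 (\<xi>,\<eta>) (prod_br br (R u - c *s u, R u + c *s u) (a,b))"
proof -
  note B = lie_facts[OF lie]
  note L = lin_facts[OF Rlin]
  have I: "dpair \<eta> (br x u) = lam * dpair \<xi> (br x u)" for x
    using inv[of x] by (simp add: dpair_diff_l dpair_scale_l)
  have A: "br (R u) a = - br a (R u)" "br u a = - br a u" "br (R u) b = - br b (R u)" "br u b = - br b u"
    by (rule B(9))+
  show ?thesis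
    unfolding pair2_def prod_br_def calR_def
    apply (simp add: A B(1-8) L dpair_add_r dpair_diff_r dpair_neg_r dpair_scale_r I)
    apply (simp add: algebra_simps)
    done
qed

theorem theorem2p3:
  fixes br :: "'f::real_normed_field ^ 'n \<Rightarrow> 'f ^ 'n \<Rightarrow> 'f ^ 'n"
    and R :: "'f ^ 'n \<Rightarrow> 'f ^ 'n" and c lam :: 'f
    and H :: "'f ^ 'n \<Rightarrow> 'f"
    and K :: "('f ^ 'n) \<times> ('f ^ 'n) \<Rightarrow> 'f"
    and \<xi> \<eta> :: "'f ^ 'n"
  assumes lie: "lie_algebra (*s) br"
    and Rlin: "f_linear (*s) R"
    and Rmat: "is_R_matrix pscale (prod_br br) (calR R c)"
    and Hinv: "ad_star_invariant br H"
    and Kdiff: "\<exists>w. has_dgrad2 K w (\<xi>, \<eta>)"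
  shows "poissonR br (calR R c) K (\<lambda>p. H (lam *s fst p - snd p)) (\<xi>, \<eta>)
           = ((1 - lam) / 2) * pair2 (\<xi>, \<eta>)
               (prod_br br (R (dgrad H (lam *s \<xi> - \<eta>)) - c *s dgrad H (lam *s \<xi> - \<eta>),
                            R (dgrad H (lam *s \<xi> - \<eta>)) + c *s dgrad H (lam *s \<xi> - \<eta>))
                           (dgrad2 K (\<xi>, \<eta>)))
       \<and> (\<forall>gp gm Pp Pm.
            vec.subspace gp \<and> vec.subspace gm
            \<and> (\<forall>x\<in>gp. \<forall>y\<in>gp. br x y \<in> gp) \<and> (\<forall>x\<in>gm. \<forall>y\<in>gm. br x y \<in> gm)
            \<and> gp \<inter> gm = {0}
            \<and> (\<forall>x. Pp x \<in> gp \<and> Pm x \<in> gm \<and> Pp x + Pm x = x)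
            \<and> (\<forall>x. R x = Pp x - Pm x) \<and> c = 1
          \<longrightarrow> poissonR br (calR R c) K (\<lambda>p. H (lam *s fst p - snd p)) (\<xi>, \<eta>)
              = (1 - lam) * pair2 (\<xi>, \<eta>)
                  (prod_br br (- Pm (dgrad H (lam *s \<xi> - \<eta>)), Pp (dgrad H (lam *s \<xi> - \<eta>)))
                              (dgrad2 K (\<xi>, \<eta>))))"
proof -
  note B = lie_facts[OF lie]
  obtain w where w: "has_dgrad2 K w (\<xi>, \<eta>)" using Kdiff by blast
  have dK: "dgrad2 K (\<xi>, \<eta>) = w"
    unfolding dgrad2_def using w has_dgrad2_unique by blast
  define v where "v = lam *s \<xi> - \<eta>"
  define u where "u = dgrad H v"
  have hu: "has_dgrad H u v"
  proof -
    obtain u' where "has_dgrad H u' v" using Hinv unfolding ad_star_invariant_def by blast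
    thus ?thesis unfolding u_def dgrad_def using has_dgrad_unique by (metis theI)
  qed
  have inv: "\<And>x. dpair (lam *s \<xi> - \<eta>) (br x u) = 0"
    using Hinv unfolding ad_star_invariant_def u_def v_def by blast
  have f: "((\<lambda>p. lam *s fst p - snd p) has_derivative (\<lambda>q. lam *s fst q - snd q)) (at (\<xi>,\<eta>))"
    by (intro has_derivative_diff bounded_linear.has_derivative[OF bl_smult] has_derivative_fst has_derivative_snd has_derivative_ident)
  have hG: "has_dgrad2 (\<lambda>p. H (lam *s fst p - snd p)) (lam *s u, u) (\<xi>, \<eta>)"
    unfolding has_dgrad2_def
    apply (rule has_derivative_eq_rhs)
     apply (rule has_derivative_compose[OF f])
    using hu apply (simp add: has_dgrad_def v_def)
    by (simp add: fun_eq_iff pair2_def dpair_diff_l dpair_scale_l dpair_scale_r)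
  have dG: "dgrad2 (\<lambda>p. H (lam *s fst p - snd p)) (\<xi>, \<eta>) = (lam *s u, u)"
    unfolding dgrad2_def using hG has_dgrad2_unique by blast
  have P: "poissonR br (calR R c) K (\<lambda>p. H (lam *s fst p - snd p)) (\<xi>, \<eta>)
      = ((1-lam)/2) * pair2 (\<xi>,\<eta>) (prod_br br (R u - c *s u, R u + c *s u) w)"
    unfolding poissonR_def dK dG using alg[OF lie Rlin inv, of c "fst w" "snd w"] by simp
  show ?thesis
  proof (intro conjI allI impI)
    show "poissonR br (calR R c) K (\<lambda>p. H (lam *s fst p - snd p)) (\<xi>, \<eta>)
           = ((1 - lam) / 2) * pair2 (\<xi>, \<eta>)
               (prod_br br (R (dgrad H (lam *s \<xi> - \<eta>)) - c *s dgrad H (lam *s \<xi> - \<eta>),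
                            R (dgrad H (lam *s \<xi> - \<eta>)) + c *s dgrad H (lam *s \<xi> - \<eta>))
                           (dgrad2 K (\<xi>, \<eta>)))"
      using P unfolding dK u_def v_def .
  next
    fix gp gm Pp Pm
    assume H: "vec.subspace gp \<and> vec.subspace gm
            \<and> (\<forall>x\<in>gp. \<forall>y\<in>gp. br x y \<in> gp) \<and> (\<forall>x\<in>gm. \<forall>y\<in>gm. br x y \<in> gm)
            \<and> gp \<inter> gm = {0}
            \<and> (\<forall>x. Pp x \<in> gp \<and> Pm x \<in> gm \<and> Pp x + Pm x = x)
            \<and> (\<forall>x. R x = Pp x - Pm x) \<and> c = (1::'f)"
    have e1: "R u - c *s u = (-2) *s Pm u"
    proof -
      have "u = Pp u + Pm u" using H by simp
      hence "R u - c *s u = Pp u - Pm u - (Pp u + Pm u)" using H by (metis vector_smult_lid)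
      thus ?thesis by (simp add: vec_eq_iff algebra_simps)
    qed
    have e2: "R u + c *s u = 2 *s Pp u"
    proof -
      have "u = Pp u + Pm u" using H by simp
      hence "R u + c *s u = Pp u - Pm u + (Pp u + Pm u)" using H by (metis vector_smult_lid)
      thus ?thesis by (simp add: vec_eq_iff algebra_simps)
    qed
    show "poissonR br (calR R c) K (\<lambda>p. H (lam *s fst p - snd p)) (\<xi>, \<eta>)
              = (1 - lam) * pair2 (\<xi>, \<eta>)
                  (prod_br br (- Pm (dgrad H (lam *s \<xi> - \<eta>)), Pp (dgrad H (lam *s \<xi> - \<eta>)))
                              (dgrad2 K (\<xi>, \<eta>)))"
      unfolding P dK e1 e2 u_def[symmetric] v_def[symmetric]
      by (simp add: prod_br_def pair2_def B(3) B(7) dpair_scale_r dpair_neg_r field_simps)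
  qed
qed

end
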